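(* Let $X$ be a reflexive real Banach space, $Y$ a real Banach space, $\Omega$ a measure space, $Z:=L^2(\Omega)$, and $e:Y\to Z$ a linear continuous dense embedding. Let $f:X\to\mathbb{R}$ and $g:X\to Y$ be continuously Fréchet differentiable, and assume $f$ and $x\mapsto\|g_+(x)\|_Z$ are weakly lower semicontinuous. Then every local solution $\bar x$ of the problem $\min f(x)$ s.t. $g(x)\le 0$ satisfies the AKKT conditions, i.e. there exist sequences $x^k\to\bar x$ in $X$ and $(\lambda^k)\subset K_Y^+$ such that $f'(x^k)+g'(x^k)^*\lambda^k\to 0$ in $X^*$ and $\langle\lambda^k,g_-(x^k)\rangle\to 0$.
   Context: The order on $Y$ is induced by $Z$: $K_Y:=\{y\in Y: e(y)\ge 0 \text{ a.e.}\}$ and $y\le 0$ means $-y\in K_Y$. $K_Y^+:=\{\mu\in Y^*:\langle\mu,y\rangle\ge 0\ \forall y\in K_Y\}$ is the dual cone, where $\langle\cdot,\cdot\rangle$ is the duality pairing between $Y^*$ and $Y$; $Z\cong Z^*$ is regarded as a subspace of $Y^*$ via $e^*$. For $z\in Z$, $z_+:=\max\{z,0\}$, $z_-:=\max\{-z,0\}$ pointwise, and $g_\pm(x):=(e(g(x)))_\pm$. *)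

theory Defs
  imports "HOL-Analysis.Analysis" "HOL-Probability.Probability"
begin

definition reflexive_space :: "'a::real_normed_vector itself \<Rightarrow> bool" where
  "reflexive_space _ \<longleftrightarrow>
     (\<forall>\<Phi> :: ('a \<Rightarrow>\<^sub>L real) \<Rightarrow>\<^sub>L real. \<exists>x::'a. \<forall>\<phi>. blinfun_apply \<Phi> \<phi> = blinfun_apply \<phi> x)"

definition weak_topology :: "'a::real_normed_vector topology" where
  "weak_topology = topology_generated_by
     {blinfun_apply \<phi> -` U | (\<phi> :: 'a \<Rightarrow>\<^sub>L real) U. open U}"

definition weakly_lsc :: "('a::real_normed_vector \<Rightarrow> real) \<Rightarrow> bool" where
  "weakly_lsc f \<longleftrightarrow> (\<forall>c. closedin weak_topology {x. f x \<le> c})"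

definition sq_int :: "'w measure \<Rightarrow> ('w \<Rightarrow> real) \<Rightarrow> bool" where
  "sq_int M h \<longleftrightarrow> h \<in> borel_measurable M \<and> integrable M (\<lambda>w. (h w)^2)"

definition L2norm :: "'w measure \<Rightarrow> ('w \<Rightarrow> real) \<Rightarrow> real" where
  "L2norm M h = sqrt (LINT w|M. (h w)^2)"

definition dense_L2_embedding :: "'w measure \<Rightarrow> ('y::real_normed_vector \<Rightarrow> 'w \<Rightarrow> real) \<Rightarrow> bool" where
  "dense_L2_embedding M e \<longleftrightarrow>
     (\<forall>y. sq_int M (e y)) \<and>
     (\<forall>y1 y2. AE w in M. e (y1 + y2) w = e y1 w + e y2 w) \<and>
     (\<forall>c y. AE w in M. e (c *\<^sub>R y) w = c * e y w) \<and>
     (\<exists>C. \<forall>y. L2norm M (e y) \<le> C * norm y) \<and>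
     (\<forall>y. (AE w in M. e y w = 0) \<longrightarrow> y = 0) \<and>
     (\<forall>h. sq_int M h \<longrightarrow> (\<forall>\<epsilon>>0. \<exists>y. L2norm M (\<lambda>w. e y w - h w) < \<epsilon>))"

definition cone_KY :: "'w measure \<Rightarrow> ('y \<Rightarrow> 'w \<Rightarrow> real) \<Rightarrow> 'y set" where
  "cone_KY M e = {y. AE w in M. e y w \<ge> 0}"

definition dual_cone_KY :: "'w measure \<Rightarrow> ('y::real_normed_vector \<Rightarrow> 'w \<Rightarrow> real) \<Rightarrow> ('y \<Rightarrow>\<^sub>L real) set" where
  "dual_cone_KY M e = {\<mu>. \<forall>y \<in> cone_KY M e. blinfun_apply \<mu> y \<ge> 0}"

definition pos_part :: "('w \<Rightarrow> real) \<Rightarrow> 'w \<Rightarrow> real" where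
  "pos_part z = (\<lambda>w. max (z w) 0)"

definition neg_part :: "('w \<Rightarrow> real) \<Rightarrow> 'w \<Rightarrow> real" where
  "neg_part z = (\<lambda>w. max (- z w) 0)"

definition local_solution ::
  "'w measure \<Rightarrow> ('y::real_normed_vector \<Rightarrow> 'w \<Rightarrow> real) \<Rightarrow> ('x::real_normed_vector \<Rightarrow> real) \<Rightarrow> ('x \<Rightarrow> 'y) \<Rightarrow> 'x \<Rightarrow> bool" where
  "local_solution M e f g xb \<longleftrightarrow>
     - g xb \<in> cone_KY M e \<and>
     (\<exists>\<epsilon>>0. \<forall>x. - g x \<in> cone_KY M e \<and> norm (x - xb) < \<epsilon> \<longrightarrow> f xb \<le> f x)"

end

theory Submission
  imports Defs
begin

definition hb_adm :: "'a::real_normed_vector \<Rightarrow> ('a \<times> real) set \<Rightarrow> bool" where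
  "hb_adm x0 G \<longleftrightarrow> (0,0) \<in> G \<and> (\<forall>u a v b. (u,a) \<in> G \<longrightarrow> (v,b) \<in> G \<longrightarrow> (u+v, a+b) \<in> G)
     \<and> (\<forall>u a r. (u,a) \<in> G \<longrightarrow> (r *\<^sub>R u, r * a) \<in> G)
     \<and> (\<forall>u a. (u,a) \<in> G \<longrightarrow> a \<le> norm u) \<and> (x0, norm x0) \<in> G"

lemma hb_adm_add: "hb_adm x0 G \<Longrightarrow> (u,a) \<in> G \<Longrightarrow> (v,b) \<in> G \<Longrightarrow> (u+v, a+b) \<in> G"
  unfolding hb_adm_def by blast

lemma hb_max_total:
  fixes x0 :: "'a::real_normed_vector"
  assumes MA: "hb_adm x0 M" and max: "\<forall>X. hb_adm x0 X \<longrightarrow> M \<subseteq> X \<longrightarrow> X = M"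
  shows "\<exists>c. (y,c) \<in> M"
proof (rule ccontr)
  assume ny: "\<not> (\<exists>c. (y,c) \<in> M)"
  have add: "\<And>u a v b. (u,a) \<in> M \<Longrightarrow> (v,b) \<in> M \<Longrightarrow> (u+v, a+b) \<in> M"
    and scl: "\<And>u a r. (u,a) \<in> M \<Longrightarrow> (r *\<^sub>R u, r * a) \<in> M"
    and dom: "\<And>u a. (u,a) \<in> M \<Longrightarrow> a \<le> norm u" and z: "(0,0) \<in> M"
    and x0: "(x0, norm x0) \<in> M"
    using MA unfolding hb_adm_def by blast+
  have key: "a - norm (u - y) \<le> norm (v + y) - b" if "(u,a) \<in> M" "(v,b) \<in> M" for u a v b
  proof -
    have "a + b \<le> norm (u + v)" using dom[OF add[OF that]] .
    also have "u + v = (u - y) + (v + y)" by simp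
    also have "norm \<dots> \<le> norm (u - y) + norm (v + y)" by (rule norm_triangle_ineq)
    finally show ?thesis by simp
  qed
  define S where "S = {a - norm (u - y) | u a. (u,a) \<in> M}"
  define c where "c = Sup S"
  have Sne: "S \<noteq> {}" using z unfolding S_def by blast
  have Sbdd: "bdd_above S" unfolding S_def bdd_above_def using key[OF _ z] by fastforce
  have c_ge: "a - norm (u - y) \<le> c" if "(u,a) \<in> M" for u a
    unfolding c_def by (rule cSup_upper[OF _ Sbdd]) (use that S_def in blast)
  have c_le: "c \<le> norm (v + y) - b" if "(v,b) \<in> M" for v b
    unfolding c_def by (rule cSup_least[OF Sne]) (use key that S_def in blast)
  define M' where "M' = {(u + t *\<^sub>R y, a + t * c) | u a t. (u,a) \<in> M}"
  have dom': "a + t * c \<le> norm (u + t *\<^sub>R y)" if "(u,a) \<in> M" for u a t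
  proof (cases t "0::real" rule: linorder_cases)
    case less
    define s where "s = - t"
    have s: "s > 0" using less s_def by simp
    have "(inverse s *\<^sub>R u, inverse s * a) \<in> M" by (rule scl[OF that])
    from c_ge[OF this] have "inverse s * a - norm (inverse s *\<^sub>R u - y) \<le> c" .
    hence "s * (inverse s * a - norm (inverse s *\<^sub>R u - y)) \<le> s * c" using s by (simp add: mult_left_mono)
    moreover have "s * norm (inverse s *\<^sub>R u - y) = norm (u - s *\<^sub>R y)"
    proof -
      have "s * norm (inverse s *\<^sub>R u - y) = norm (s *\<^sub>R (inverse s *\<^sub>R u - y))" using s by simp
      also have "s *\<^sub>R (inverse s *\<^sub>R u - y) = u - s *\<^sub>R y" using s by (simp add: algebra_simps)
      finally show ?thesis .
    qed
    ultimately have "a - norm (u - s *\<^sub>R y) \<le> s * c" using s by (simp add: algebra_simps)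
    thus ?thesis using s_def by (simp add: algebra_simps)
  next
    case equal
    thus ?thesis using dom[OF that] by simp
  next
    case greater
    have "(inverse t *\<^sub>R u, inverse t * a) \<in> M" by (rule scl[OF that])
    from c_le[OF this] have "c \<le> norm (inverse t *\<^sub>R u + y) - inverse t * a" .
    hence "t * c \<le> t * (norm (inverse t *\<^sub>R u + y) - inverse t * a)" using greater by (simp add: mult_left_mono)
    moreover have "t * norm (inverse t *\<^sub>R u + y) = norm (u + t *\<^sub>R y)"
    proof -
      have "t * norm (inverse t *\<^sub>R u + y) = norm (t *\<^sub>R (inverse t *\<^sub>R u + y))" using greater by simp
      also have "t *\<^sub>R (inverse t *\<^sub>R u + y) = u + t *\<^sub>R y" using greater by (simp add: algebra_simps)
      finally show ?thesis .
    qed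
    ultimately show ?thesis using greater by (simp add: algebra_simps)
  qed
  have "hb_adm x0 M'"
    unfolding hb_adm_def
  proof (intro conjI allI impI)
    show "(0,0) \<in> M'" unfolding M'_def using z by force
    show "(x0, norm x0) \<in> M'" unfolding M'_def using x0 by force
    fix u a v b assume "(u,a) \<in> M'" "(v,b) \<in> M'"
    then obtain u1 a1 t1 u2 a2 t2 where "(u1,a1) \<in> M" "(u2,a2) \<in> M"
      "u = u1 + t1 *\<^sub>R y" "a = a1 + t1 * c" "v = u2 + t2 *\<^sub>R y" "b = a2 + t2 * c"
      unfolding M'_def by blast
    thus "(u+v, a+b) \<in> M'" unfolding M'_def
      by (intro CollectI exI[of _ "u1+u2"] exI[of _ "a1+a2"] exI[of _ "t1+t2"])
         (auto simp: add algebra_simps)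
  next
    fix u a r assume "(u,a) \<in> M'"
    then obtain u1 a1 t1 where "(u1,a1) \<in> M" "u = u1 + t1 *\<^sub>R y" "a = a1 + t1 * c"
      unfolding M'_def by blast
    note h = this
    have m: "(r *\<^sub>R u1, r*a1) \<in> M" using scl h(1) by blast
    have e: "(r *\<^sub>R u, r*a) = (r *\<^sub>R u1 + (r * t1) *\<^sub>R y, r * a1 + (r * t1) * c)"
      using h by (simp add: algebra_simps)
    show "(r *\<^sub>R u, r * a) \<in> M'" unfolding M'_def using m e by blast
  next
    fix u a assume "(u,a) \<in> M'"
    then obtain u1 a1 t1 where "(u1,a1) \<in> M" "u = u1 + t1 *\<^sub>R y" "a = a1 + t1 * c"
      unfolding M'_def by blast
    thus "a \<le> norm u" using dom' by simp
  qed
  moreover have "M \<subseteq> M'"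
  proof
    fix p assume "p \<in> M" then obtain u a where "p = (u,a)" "(u,a) \<in> M" by (cases p) auto
    thus "p \<in> M'" unfolding M'_def by (intro CollectI exI[of _ u] exI[of _ a] exI[of _ 0]) simp
  qed
  ultimately have "M' = M" using max by blast
  moreover have "(y, c) \<in> M'" unfolding M'_def using z by (intro CollectI exI[of _ 0] exI[of _ 0] exI[of _ 1]) simp
  ultimately show False using ny by blast
qed

lemma hahn_banach_norming:
  fixes x0 :: "'a::real_normed_vector"
  shows "\<exists>\<phi>::'a \<Rightarrow>\<^sub>L real. norm \<phi> \<le> 1 \<and> blinfun_apply \<phi> x0 = norm x0"
proof -
  define A where "A = {G. hb_adm x0 G}"
  have "\<exists>M\<in>A. \<forall>X\<in>A. M \<subseteq> X \<longrightarrow> X = M"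
  proof (rule Zorn_Lemma2, intro ballI)
    fix C assume C: "C \<in> chains A"
    show "\<exists>U\<in>A. \<forall>X\<in>C. X \<subseteq> U"
    proof (cases "C = {}")
      case True
      define G0 where "G0 = range (\<lambda>t::real. (t *\<^sub>R x0, t * norm x0))"
      have "hb_adm x0 G0" unfolding hb_adm_def G0_def
      proof (intro conjI allI impI)
        show "(0,0) \<in> range (\<lambda>t::real. (t *\<^sub>R x0, t * norm x0))" by (rule image_eqI[of _ _ 0]) auto
        show "(x0, norm x0) \<in> range (\<lambda>t::real. (t *\<^sub>R x0, t * norm x0))" by (rule image_eqI[of _ _ 1]) auto
        fix u a v b assume "(u,a) \<in> range (\<lambda>t::real. (t *\<^sub>R x0, t * norm x0))"
          "(v,b) \<in> range (\<lambda>t::real. (t *\<^sub>R x0, t * norm x0))"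
        then obtain s t where "u = s *\<^sub>R x0" "a = s * norm x0" "v = t *\<^sub>R x0" "b = t * norm x0" by auto
        thus "(u+v, a+b) \<in> range (\<lambda>t::real. (t *\<^sub>R x0, t * norm x0))"
          by (intro image_eqI[of _ _ "s+t"]) (auto simp: algebra_simps)
      next
        fix u a r assume "(u,a) \<in> range (\<lambda>t::real. (t *\<^sub>R x0, t * norm x0))"
        then obtain s where "u = s *\<^sub>R x0" "a = s * norm x0" by auto
        thus "(r *\<^sub>R u, r*a) \<in> range (\<lambda>t::real. (t *\<^sub>R x0, t * norm x0))"
          by (intro image_eqI[of _ _ "r * s"]) (auto simp: algebra_simps)
      next
        fix u a assume "(u,a) \<in> range (\<lambda>t::real. (t *\<^sub>R x0, t * norm x0))"
        then obtain s where "u = s *\<^sub>R x0" "a = s * norm x0" by auto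
        thus "a \<le> norm u" by (simp add: mult_right_mono)
      qed
      thus ?thesis using True A_def by blast
    next
      case False
      have CA: "C \<subseteq> A" and ch: "\<And>X Y. X \<in> C \<Longrightarrow> Y \<in> C \<Longrightarrow> X \<subseteq> Y \<or> Y \<subseteq> X"
        using C unfolding chains_def chain_subset_def by auto
      have adm: "\<And>X. X \<in> C \<Longrightarrow> hb_adm x0 X" using CA A_def by auto
      have "hb_adm x0 (\<Union>C)" unfolding hb_adm_def
      proof (intro conjI allI impI)
        obtain X where X: "X \<in> C" using False by blast
        show "(0,0) \<in> \<Union>C" using adm[OF X] X unfolding hb_adm_def by blast
        show "(x0, norm x0) \<in> \<Union>C" using adm[OF X] X unfolding hb_adm_def by blast
      next
        fix u a v b assume "(u,a) \<in> \<Union>C" "(v,b) \<in> \<Union>C"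
        then obtain X Y where XY: "X \<in> C" "Y \<in> C" "(u,a) \<in> X" "(v,b) \<in> Y" by blast
        show "(u+v, a+b) \<in> \<Union>C"
        proof (cases "X \<subseteq> Y")
          case True
          hence "(u,a) \<in> Y" using XY by blast
          hence "(u+v, a+b) \<in> Y" using hb_adm_add[OF adm[OF XY(2)]] XY(4) by blast
          thus ?thesis using XY(2) by blast
        next
          case False
          hence "Y \<subseteq> X" using ch XY by blast
          hence "(v,b) \<in> X" using XY by blast
          hence "(u+v, a+b) \<in> X" using hb_adm_add[OF adm[OF XY(1)]] XY(3) by blast
          thus ?thesis using XY(1) by blast
        qed
      next
        fix u a r assume "(u,a) \<in> \<Union>C"
        then obtain X where "X \<in> C" "(u,a) \<in> X" by blast
        thus "(r *\<^sub>R u, r*a) \<in> \<Union>C" using adm unfolding hb_adm_def by blast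
      next
        fix u a assume "(u,a) \<in> \<Union>C"
        then obtain X where "X \<in> C" "(u,a) \<in> X" by blast
        thus "a \<le> norm u" using adm unfolding hb_adm_def by blast
      qed
      thus ?thesis using A_def by blast
    qed
  qed
  then obtain M where MA: "hb_adm x0 M" and max: "\<forall>X. hb_adm x0 X \<longrightarrow> M \<subseteq> X \<longrightarrow> X = M"
    unfolding A_def by blast
  have add: "\<And>u a v b. (u,a) \<in> M \<Longrightarrow> (v,b) \<in> M \<Longrightarrow> (u+v, a+b) \<in> M"
    and scl: "\<And>u a r. (u,a) \<in> M \<Longrightarrow> (r *\<^sub>R u, r * a) \<in> M"
    and dom: "\<And>u a. (u,a) \<in> M \<Longrightarrow> a \<le> norm u"
    and x0: "(x0, norm x0) \<in> M"
    using MA unfolding hb_adm_def by blast+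
  define p where "p y = (SOME c. (y,c) \<in> M)" for y
  have pin: "(y, p y) \<in> M" for y
    unfolding p_def using hb_max_total[OF MA max] by (rule someI_ex)
  have uniq: "p y = c" if "(y,c) \<in> M" for y c
  proof -
    have "(y + (-1) *\<^sub>R y, p y + (-1) * c) \<in> M" by (rule add[OF pin scl[OF that]])
    hence 1: "p y - c \<le> 0" using dom by fastforce
    have "(y + (-1) *\<^sub>R y, c + (-1) * p y) \<in> M" by (rule add[OF that scl[OF pin]])
    hence 2: "c - p y \<le> 0" using dom by fastforce
    show ?thesis using 1 2 by simp
  qed
  have bl: "bounded_linear p"
  proof (rule bounded_linear_intro[where K=1])
    show "p (x + y) = p x + p y" for x y using uniq[OF add[OF pin pin]] .
    show "p (r *\<^sub>R x) = r *\<^sub>R p x" for r x using uniq[OF scl[OF pin]] by simp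
    show "norm (p x) \<le> norm x * 1" for x
    proof -
      have "p x \<le> norm x" using dom[OF pin] .
      moreover have "- p x \<le> norm x" using dom[OF scl[OF pin[of x], of "-1"]] by simp
      ultimately show ?thesis by simp
    qed
  qed
  show ?thesis
  proof (intro exI conjI)
    show "norm (Blinfun p) \<le> 1"
    proof (rule norm_blinfun_bound)
      fix x
      have "p x \<le> norm x" using dom[OF pin] .
      moreover have "- p x \<le> norm x" using dom[OF scl[OF pin[of x], of "-1"]] by simp
      ultimately show "norm (blinfun_apply (Blinfun p) x) \<le> 1 * norm x"
        using bl by (simp add: bounded_linear_Blinfun_apply)
    qed simp
    show "blinfun_apply (Blinfun p) x0 = norm x0" using bl uniq[OF x0] by (simp add: bounded_linear_Blinfun_apply)
  qed
qed

lemma weak_topspace [simp]: "topspace (weak_topology :: 'a::real_normed_vector topology) = UNIV"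
proof -
  have "UNIV \<in> {blinfun_apply \<phi> -` U | (\<phi> :: 'a \<Rightarrow>\<^sub>L real) U. open U}"
    by (rule CollectI, rule exI[of _ 0], rule exI[of _ UNIV]) auto
  thus ?thesis unfolding weak_topology_def topology_generated_by_topspace by blast
qed

lemma weak_open_gen: "open (U::real set) \<Longrightarrow> openin weak_topology (blinfun_apply (\<phi>::'a::real_normed_vector \<Rightarrow>\<^sub>L real) -` U)"
  unfolding weak_topology_def by (rule topology_generated_by_Basis) blast

lemma weak_open_gt: "openin weak_topology {x::'a::real_normed_vector. a < blinfun_apply (\<phi>::'a \<Rightarrow>\<^sub>L real) x}"
  using weak_open_gen[where U="{a<..}" and \<phi>=\<phi>] by (simp add: vimage_def)

lemma weakly_lsc_open:
  fixes f :: "'a::real_normed_vector \<Rightarrow> real"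
  shows "weakly_lsc f \<longleftrightarrow> (\<forall>c. openin weak_topology {x. c < f x})"
proof -
  have "closedin weak_topology {x. f x \<le> c} \<longleftrightarrow> openin weak_topology {x. c < f x}" for c
  proof -
    have "{x. c < f x} = UNIV - {x. f x \<le> c}" by auto
    thus ?thesis by (simp add: closedin_def)
  qed
  thus ?thesis unfolding weakly_lsc_def by simp
qed

lemma weakly_lsc_add:
  fixes f h :: "'a::real_normed_vector \<Rightarrow> real"
  assumes "weakly_lsc f" "weakly_lsc h"
  shows "weakly_lsc (\<lambda>x. f x + h x)"
  unfolding weakly_lsc_open
proof
  fix c
  have "{x. c < f x + h x} = \<Union> (range (\<lambda>a. {x. a < f x} \<inter> {x. c - a < h x}))"
  proof safe
    fix x assume "c < f x + h x"
    hence "(f x + c - h x)/2 < f x" "c - (f x + c - h x)/2 < h x" by (simp_all add: field_simps)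
    hence "x \<in> {y. (f x + c - h x)/2 < f y} \<inter> {y. c - (f x + c - h x)/2 < h y}" by auto
    thus "x \<in> \<Union> (range (\<lambda>a. {x. a < f x} \<inter> {x. c - a < h x}))" by blast
  qed auto
  moreover have "openin weak_topology (\<Union> (range (\<lambda>a. {x. a < f x} \<inter> {x. c - a < h x})))"
    using assms unfolding weakly_lsc_open by (intro openin_Union) auto
  ultimately show "openin weak_topology {x. c < f x + h x}" by simp
qed

lemma weak_closed_cball:
  "closedin weak_topology (cball (c::'a::real_normed_vector) r)"
proof -
  have "UNIV - cball c r = \<Union> ((\<lambda>\<phi>. {x. r + blinfun_apply \<phi> c < blinfun_apply \<phi> x}) ` {\<phi>. norm \<phi> \<le> 1})"
  proof safe
    fix x assume "x \<notin> cball c r"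
    hence d: "norm (x - c) > r" by (simp add: dist_norm norm_minus_commute)
    obtain \<phi> :: "'a \<Rightarrow>\<^sub>L real" where "norm \<phi> \<le> 1" "blinfun_apply \<phi> (x - c) = norm (x - c)"
      using hahn_banach_norming by blast
    thus "x \<in> \<Union> ((\<lambda>\<phi>. {x. r + blinfun_apply \<phi> c < blinfun_apply \<phi> x}) ` {\<phi>. norm \<phi> \<le> 1})"
      using d by (auto simp: blinfun.diff_right)
  next
    fix x and \<phi> :: "'a \<Rightarrow>\<^sub>L real" assume "norm \<phi> \<le> 1" "r + blinfun_apply \<phi> c < blinfun_apply \<phi> x"
      "x \<in> cball c r"
    have "blinfun_apply \<phi> (x - c) \<le> norm (blinfun_apply \<phi> (x - c))" by simp
    also have "\<dots> \<le> norm \<phi> * norm (x - c)" by (rule norm_blinfun)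
    also have "\<dots> \<le> 1 * norm (x - c)" using \<open>norm \<phi> \<le> 1\<close> by (intro mult_right_mono) auto
    also have "\<dots> \<le> r" using \<open>x \<in> cball c r\<close> by (simp add: dist_norm norm_minus_commute)
    finally show False using \<open>r + blinfun_apply \<phi> c < blinfun_apply \<phi> x\<close> by (simp add: blinfun.diff_right)
  qed auto
  moreover have "openin weak_topology (\<Union> ((\<lambda>\<phi>. {x. r + blinfun_apply \<phi> c < blinfun_apply \<phi> x}) ` {\<phi>. norm \<phi> \<le> 1}))"
    by (intro openin_Union) (auto intro: weak_open_gt)
  ultimately show ?thesis by (simp add: closedin_def)
qed

lemma weakly_lsc_dist2:
  "weakly_lsc (\<lambda>x::'a::real_normed_vector. norm (x - c)^2 / 2)"
  unfolding weakly_lsc_def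
proof
  fix a :: real
  show "closedin weak_topology {x. norm (x - c)^2 / 2 \<le> a}"
  proof (cases "a < 0")
    case True
    hence "{x. norm (x - c)^2 / 2 \<le> a} = {}" by (auto simp: not_le intro: order.strict_trans2[of _ 0])
    thus ?thesis by simp
  next
    case False
    have "{x. norm (x - c)^2 / 2 \<le> a} = cball c (sqrt (2*a))"
    proof safe
      fix x assume "norm (x - c)^2 / 2 \<le> a"
      hence "norm (x - c)^2 \<le> 2*a" by simp
      hence "sqrt (norm (x - c)^2) \<le> sqrt (2*a)" by (rule real_sqrt_le_mono)
      thus "x \<in> cball c (sqrt (2*a))" by (simp add: dist_norm norm_minus_commute)
    next
      fix x assume "x \<in> cball c (sqrt (2*a))"
      hence "norm (x - c) \<le> sqrt (2*a)" by (simp add: dist_norm norm_minus_commute)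
      hence "norm (x - c)^2 \<le> (sqrt (2*a))^2" by (intro power_mono) auto
      thus "norm (x - c)^2 / 2 \<le> a" using False by simp
    qed
    thus ?thesis using weak_closed_cball by simp
  qed
qed

lemma weakly_lsc_scaled_sq:
  fixes N :: "'a::real_normed_vector \<Rightarrow> real"
  assumes "weakly_lsc N" "\<And>x. N x \<ge> 0" "\<rho> > 0"
  shows "weakly_lsc (\<lambda>x. \<rho> / 2 * N x ^ 2)"
  unfolding weakly_lsc_def
proof
  fix a :: real
  show "closedin weak_topology {x. \<rho> / 2 * N x ^ 2 \<le> a}"
  proof (cases "a < 0")
    case True
    have "\<rho> / 2 * N x ^ 2 \<ge> 0" for x using assms by simp
    hence "\<not> \<rho> / 2 * N x ^ 2 \<le> a" for x using True by (meson le_less_trans not_le)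
    hence "{x. \<rho> / 2 * N x ^ 2 \<le> a} = {}" by auto
    thus ?thesis by simp
  next
    case False
    have "{x. \<rho> / 2 * N x ^ 2 \<le> a} = {x. N x \<le> sqrt (2*a/\<rho>)}"
    proof safe
      fix x assume "\<rho> / 2 * N x ^ 2 \<le> a"
      hence "N x ^ 2 \<le> 2*a/\<rho>" using assms(3) by (simp add: field_simps)
      hence "sqrt (N x ^ 2) \<le> sqrt (2*a/\<rho>)" by (rule real_sqrt_le_mono)
      thus "N x \<le> sqrt (2*a/\<rho>)" using assms(2)[of x] by simp
    next
      fix x assume "N x \<le> sqrt (2*a/\<rho>)"
      hence "N x ^ 2 \<le> (sqrt (2*a/\<rho>))^2" using assms(2)[of x] by (intro power_mono) auto
      hence "N x ^ 2 \<le> 2*a/\<rho>" using False assms(3) by simp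
      thus "\<rho> / 2 * N x ^ 2 \<le> a" using assms(3) by (simp add: field_simps)
    qed
    thus ?thesis using assms(1) unfolding weakly_lsc_def by simp
  qed
qed

lemma weak_lsc_attains_min:
  fixes f :: "'a::real_normed_vector \<Rightarrow> real"
  assumes "compactin weak_topology S" "S \<noteq> {}" "weakly_lsc f"
  shows "\<exists>x\<in>S. \<forall>y\<in>S. f x \<le> f y"
proof (rule ccontr)
  assume "\<not> ?thesis"
  hence nm: "\<forall>x\<in>S. \<exists>y\<in>S. f y < f x" by (auto simp: not_le)
  let ?U = "(\<lambda>y. {x. f y < f x}) ` S"
  have "\<forall>U\<in>?U. openin weak_topology U" using assms(3) unfolding weakly_lsc_open by auto
  moreover have "S \<subseteq> \<Union>?U" using nm by blast
  ultimately obtain F where F: "finite F" "F \<subseteq> ?U" "S \<subseteq> \<Union>F"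
    using assms(1) unfolding compactin_def by meson
  then obtain T where T: "T \<subseteq> S" "finite T" "F = (\<lambda>y. {x. f y < f x}) ` T"
    by (meson finite_subset_image)
  have "T \<noteq> {}" using T F assms(2) by auto
  then obtain y0 where y0: "y0 \<in> T" "\<forall>y\<in>T. f y0 \<le> f y"
  proof -
    have "Min (f ` T) \<in> f ` T" using \<open>T \<noteq> {}\<close> T(2) by (intro Min_in) auto
    then obtain y0 where "y0 \<in> T" "f y0 = Min (f ` T)" by auto
    moreover have "\<forall>y\<in>T. Min (f ` T) \<le> f y" using T(2) by auto
    ultimately show ?thesis using that by auto
  qed
  have "y0 \<in> \<Union>F" using y0 T F by blast
  then obtain y where "y \<in> T" "f y < f y0" using T by blast
  thus False using y0 by force
qed

lemma weak_cluster:
  fixes A :: "nat \<Rightarrow> 'a::real_normed_vector set"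
  assumes C: "compactin weak_topology C" and sub: "\<And>n. A n \<subseteq> C" and ne: "\<And>n. A n \<noteq> {}"
    and dec: "\<And>n. A (Suc n) \<subseteq> A n"
  shows "\<exists>x\<in>C. \<forall>n F. closedin weak_topology F \<longrightarrow> A n \<subseteq> F \<longrightarrow> x \<in> F"
proof -
  have decs: "A m \<subseteq> A n" if "n \<le> m" for m n
  proof -
    have "decseq A" using dec by (simp add: decseq_Suc_iff)
    thus ?thesis using decseqD that by blast
  qed
  let ?U = "range (\<lambda>n. weak_topology closure_of A n)"
  have "C \<inter> \<Inter>?U \<noteq> {}"
  proof -
    have "\<forall>Ca\<in>?U. closedin weak_topology Ca" by auto
    moreover have "C \<inter> \<Inter>F \<noteq> {}" if fin: "finite F" and fsub: "F \<subseteq> ?U" for F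
    proof -
      obtain T where T: "finite T" "F = (\<lambda>n. weak_topology closure_of A n) ` T"
        using finite_subset_image[OF fin fsub] by blast
      define N where "N = Max (insert 0 T)"
      have "A N \<subseteq> \<Inter>F"
      proof
        fix x assume "x \<in> A N"
        show "x \<in> \<Inter>F"
        proof
          fix G assume "G \<in> F"
          then obtain n where n: "n \<in> T" "G = weak_topology closure_of A n" using T by blast
          have "n \<le> N" unfolding N_def using n T by simp
          hence "x \<in> A n" using decs \<open>x \<in> A N\<close> by blast
          thus "x \<in> G" using n closure_of_subset[of "A n" weak_topology] by auto
        qed
      qed
      moreover obtain x where "x \<in> A N" using ne by blast
      ultimately show ?thesis using sub by blast
    qed
    ultimately show ?thesis using C unfolding compactin_fip by blast
  qed
  then obtain x where x: "x \<in> C" "x \<in> \<Inter>?U" by blast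
  show ?thesis
  proof (intro bexI[OF _ x(1)] allI impI)
    fix n F assume "closedin weak_topology F" "A n \<subseteq> F"
    hence "weak_topology closure_of A n \<subseteq> F" by (rule closure_of_minimal[rotated])
    thus "x \<in> F" using x by blast
  qed
qed

lemma closedin_preimage_UNIV:
  assumes "continuous_map X euclideanreal h" "closed C" "topspace X = UNIV"
  shows "closedin X {x. h x \<in> C}"
  using closedin_continuous_map_preimage[OF assms(1), of C] assms(2,3) by simp

lemma weak_compact_cball0:
  fixes R :: real
  assumes refl: "reflexive_space TYPE('a::real_normed_vector)" and R: "R \<ge> 0"
  shows "compactin weak_topology (cball (0::'a) R)"
proof -
  define P :: "(('a \<Rightarrow>\<^sub>L real) \<Rightarrow> real) topology" where "P = product_topology (\<lambda>_. euclideanreal) UNIV"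
  have topP: "topspace P = UNIV" unfolding P_def by simp
  have proj: "continuous_map P euclideanreal (\<lambda>\<Phi>. \<Phi> \<phi>)" for \<phi>
    unfolding P_def by (rule continuous_map_product_projection) simp
  define A1 where "A1 \<phi> = {\<Phi>. \<Phi> \<phi> \<in> {-(R * norm \<phi>)..R * norm \<phi>}}" for \<phi> :: "'a \<Rightarrow>\<^sub>L real"
  define A2 where "A2 \<phi> \<psi> = {\<Phi> :: ('a \<Rightarrow>\<^sub>L real) \<Rightarrow> real. \<Phi> (\<phi> + \<psi>) - \<Phi> \<phi> - \<Phi> \<psi> \<in> {0}}" for \<phi> \<psi> :: "'a \<Rightarrow>\<^sub>L real"
  define A3 where "A3 c \<phi> = {\<Phi> :: ('a \<Rightarrow>\<^sub>L real) \<Rightarrow> real. \<Phi> (c *\<^sub>R \<phi>) - c * \<Phi> \<phi> \<in> {0}}" for c and \<phi> :: "'a \<Rightarrow>\<^sub>L real"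
  define K where "K = (\<Inter>\<phi>. A1 \<phi>) \<inter> (\<Inter>\<phi>. \<Inter>\<psi>. A2 \<phi> \<psi>) \<inter> (\<Inter>c. \<Inter>\<phi>. A3 c \<phi>)"
  have Kmem: "\<Phi> \<in> K \<longleftrightarrow> (\<forall>\<phi>. \<Phi> \<phi> \<in> {-(R * norm \<phi>)..R * norm \<phi>}) \<and>
      (\<forall>\<phi> \<psi>. \<Phi> (\<phi> + \<psi>) = \<Phi> \<phi> + \<Phi> \<psi>) \<and> (\<forall>c \<phi>. \<Phi> (c *\<^sub>R \<phi>) = c * \<Phi> \<phi>)" for \<Phi>
    unfolding K_def A1_def A2_def A3_def by (simp add: algebra_simps)
  define B where "B = PiE UNIV (\<lambda>\<phi>::'a \<Rightarrow>\<^sub>L real. {-(R * norm \<phi>)..R * norm \<phi>})"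
  have cB: "compactin P B" unfolding P_def B_def by (subst compactin_PiE) simp
  have KB: "K \<subseteq> B" unfolding B_def by (auto simp: Kmem)
  have c1: "closedin P (A1 \<phi>)" for \<phi>
    unfolding A1_def by (rule closedin_preimage_UNIV[OF proj _ topP]) simp
  have c2: "closedin P (A2 \<phi> \<psi>)" for \<phi> \<psi>
  proof -
    have "continuous_map P euclideanreal (\<lambda>\<Phi>. \<Phi> (\<phi> + \<psi>) - \<Phi> \<phi> - \<Phi> \<psi>)"
      by (intro continuous_map_diff proj)
    thus ?thesis unfolding A2_def by (rule closedin_preimage_UNIV[OF _ _ topP]) simp
  qed
  have c3: "closedin P (A3 c \<phi>)" for c \<phi>
  proof -
    have "continuous_map P euclideanreal (\<lambda>\<Phi>. \<Phi> (c *\<^sub>R \<phi>) - c * \<Phi> \<phi>)"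
      by (intro continuous_map_diff continuous_map_real_mult_left proj)
    thus ?thesis unfolding A3_def by (rule closedin_preimage_UNIV[OF _ _ topP]) simp
  qed
  have cK: "closedin P K"
    unfolding K_def
    by (intro closedin_Int closedin_Inter) (auto intro: c1 c2 c3)
  have cK2: "compactin P K" by (rule closed_compactin[OF cB KB cK])
  define T where "T \<Phi> = (SOME x::'a. \<forall>\<phi>::'a \<Rightarrow>\<^sub>L real. blinfun_apply \<phi> x = \<Phi> \<phi>)" for \<Phi>
  have T: "\<forall>\<phi>::'a \<Rightarrow>\<^sub>L real. blinfun_apply \<phi> (T \<Phi>) = \<Phi> \<phi>" if "\<Phi> \<in> K" for \<Phi>
  proof -
    have bl: "bounded_linear \<Phi>"
    proof (rule bounded_linear_intro[where K=R])
      show "\<Phi> (x + y) = \<Phi> x + \<Phi> y" for x y using that unfolding Kmem by auto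
      show "\<Phi> (r *\<^sub>R x) = r *\<^sub>R \<Phi> x" for r x using that unfolding Kmem by auto
      show "norm (\<Phi> x) \<le> norm x * R" for x
      proof -
        have "\<Phi> x \<in> {-(R * norm x)..R * norm x}" using that unfolding Kmem by blast
        thus ?thesis by (auto simp: abs_le_iff mult.commute)
      qed
    qed
    obtain x where "\<forall>\<phi>. blinfun_apply (Blinfun \<Phi>) \<phi> = blinfun_apply \<phi> x"
      using refl unfolding reflexive_space_def by blast
    hence "\<forall>\<phi>::'a \<Rightarrow>\<^sub>L real. blinfun_apply \<phi> x = \<Phi> \<phi>" using bl by (simp add: bounded_linear_Blinfun_apply)
    thus ?thesis unfolding T_def by (rule someI)
  qed
  have contT: "continuous_map (subtopology P K) weak_topology T"
    unfolding weak_topology_def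
  proof (rule continuous_on_generated_topo)
    fix U assume "U \<in> {blinfun_apply \<phi> -` U | (\<phi> :: 'a \<Rightarrow>\<^sub>L real) U. open U}"
    hence "\<exists>\<phi> V. U = blinfun_apply (\<phi> :: 'a \<Rightarrow>\<^sub>L real) -` V \<and> open V" by auto
    then obtain \<phi> :: "'a \<Rightarrow>\<^sub>L real" and V where U: "U = blinfun_apply \<phi> -` V" "open V" by blast
    have "T -` U \<inter> topspace (subtopology P K) = K \<inter> {\<Phi> \<in> topspace P. \<Phi> \<phi> \<in> V}"
      using T U(1) topP by auto
    moreover have "openin P {\<Phi> \<in> topspace P. \<Phi> \<phi> \<in> V}"
      by (rule openin_continuous_map_preimage[OF proj]) (use U in simp)
    ultimately show "openin (subtopology P K) (T -` U \<inter> topspace (subtopology P K))"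
      by (simp add: openin_subtopology_Int2)
  next
    show "T ` topspace (subtopology P K) \<subseteq> \<Union> {blinfun_apply \<phi> -` U | (\<phi> :: 'a \<Rightarrow>\<^sub>L real) U. open U}"
      using weak_topspace[where 'a='a] unfolding weak_topology_def topology_generated_by_topspace by simp
  qed
  have "compactin weak_topology (T ` K)"
    by (rule image_compactin[OF _ contT]) (simp add: compactin_subtopology cK2)
  moreover have "T ` K = cball 0 R"
  proof safe
    fix \<Phi> assume "\<Phi> \<in> K"
    obtain \<psi> :: "'a \<Rightarrow>\<^sub>L real" where \<psi>: "norm \<psi> \<le> 1" "blinfun_apply \<psi> (T \<Phi>) = norm (T \<Phi>)"
      using hahn_banach_norming by blast
    have "norm (T \<Phi>) = \<Phi> \<psi>" using \<psi> T[OF \<open>\<Phi> \<in> K\<close>] by simp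
    also have "\<dots> \<le> R * norm \<psi>" using \<open>\<Phi> \<in> K\<close> unfolding Kmem by auto
    also have "\<dots> \<le> R * 1" using \<psi> R by (intro mult_left_mono) auto
    finally show "T \<Phi> \<in> cball 0 R" by simp
  next
    fix x :: 'a assume x: "x \<in> cball 0 R"
    define \<Phi> where "\<Phi> \<phi> = blinfun_apply \<phi> x" for \<phi> :: "'a \<Rightarrow>\<^sub>L real"
    have "\<Phi> \<in> K" unfolding Kmem \<Phi>_def
    proof (intro conjI allI)
      fix \<phi> :: "'a \<Rightarrow>\<^sub>L real"
      have "\<bar>blinfun_apply \<phi> x\<bar> \<le> norm \<phi> * norm x" using norm_blinfun[of \<phi> x] by simp
      also have "\<dots> \<le> norm \<phi> * R" using x by (intro mult_left_mono) auto
      finally show "blinfun_apply \<phi> x \<in> {-(R * norm \<phi>)..R * norm \<phi>}" by (auto simp: abs_le_iff mult.commute)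
    qed (auto simp: blinfun.add_left blinfun.scaleR_left)
    have eq: "blinfun_apply \<phi> (T \<Phi>) = blinfun_apply \<phi> x" for \<phi> :: "'a \<Rightarrow>\<^sub>L real" using T[OF \<open>\<Phi> \<in> K\<close>] \<Phi>_def by simp
    obtain \<psi> :: "'a \<Rightarrow>\<^sub>L real" where \<psi>: "blinfun_apply \<psi> (T \<Phi> - x) = norm (T \<Phi> - x)"
      using hahn_banach_norming by blast
    have "norm (T \<Phi> - x) = 0" using \<psi> eq[of \<psi>] by (simp add: blinfun.diff_right)
    hence "x = T \<Phi>" by simp
    thus "x \<in> T ` K" using \<open>\<Phi> \<in> K\<close> by blast
  qed
  ultimately show ?thesis by simp
qed

lemma weak_compact_cball:
  assumes refl: "reflexive_space TYPE('a::real_normed_vector)"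
  shows "compactin weak_topology (cball (c::'a) r)"
proof -
  have "cball c r \<subseteq> cball 0 (norm c + max r 0)"
  proof
    fix x assume "x \<in> cball c r"
    hence "norm (x - c) \<le> max r 0" by (simp add: dist_norm norm_minus_commute)
    moreover have "norm x \<le> norm c + norm (x - c)" using norm_triangle_ineq[of c "x - c"] by simp
    ultimately show "x \<in> cball 0 (norm c + max r 0)" by simp
  qed
  moreover have "compactin weak_topology (cball (0::'a) (norm c + max r 0))"
    by (rule weak_compact_cball0[OF refl]) simp
  ultimately show ?thesis
    using closed_compactin[OF _ _ weak_closed_cball] by blast
qed

lemma sq_int_prod:
  assumes "sq_int M a" "sq_int M b"
  shows "integrable M (\<lambda>w. a w * b w)"
proof (rule Bochner_Integration.integrable_bound[where f="\<lambda>w. (a w)^2 + (b w)^2"])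
  show "integrable M (\<lambda>w. (a w)^2 + (b w)^2)" using assms unfolding sq_int_def by auto
  show "(\<lambda>w. a w * b w) \<in> borel_measurable M" using assms unfolding sq_int_def by auto
  show "AE w in M. norm (a w * b w) \<le> norm ((a w)^2 + (b w)^2)"
  proof (intro AE_I2)
    fix w
    have "0 \<le> (\<bar>a w\<bar> - \<bar>b w\<bar>)^2" by simp
    hence "2 * (\<bar>a w\<bar> * \<bar>b w\<bar>) \<le> (a w)^2 + (b w)^2" by (simp add: power2_eq_square algebra_simps)
    moreover have "0 \<le> \<bar>a w\<bar> * \<bar>b w\<bar>" by simp
    ultimately have "\<bar>a w * b w\<bar> \<le> (a w)^2 + (b w)^2" unfolding abs_mult by linarith
    thus "norm (a w * b w) \<le> norm ((a w)^2 + (b w)^2)" by simp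
  qed
qed

lemma sq_int_pos_part:
  assumes "sq_int M a" shows "sq_int M (pos_part a)"
  unfolding sq_int_def pos_part_def
proof
  show "(\<lambda>w. max (a w) 0) \<in> borel_measurable M" using assms unfolding sq_int_def by auto
  show "integrable M (\<lambda>w. (max (a w) 0)^2)"
  proof (rule Bochner_Integration.integrable_bound[where f="\<lambda>w. (a w)^2"])
    show "integrable M (\<lambda>w. (a w)^2)" using assms unfolding sq_int_def by auto
    show "(\<lambda>w. (max (a w) 0)^2) \<in> borel_measurable M" using assms unfolding sq_int_def by auto
    show "AE w in M. norm ((max (a w) 0)^2) \<le> norm ((a w)^2)"
      by (intro AE_I2) (auto simp: max_def power2_eq_square)
  qed
qed

lemma sq_int_scale:
  assumes "sq_int M a" shows "sq_int M (\<lambda>w. c * a w)"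
  using assms unfolding sq_int_def by (auto simp: power_mult_distrib)

lemma sq_int_diff:
  assumes "sq_int M a" "sq_int M b" shows "sq_int M (\<lambda>w. a w - b w)"
  unfolding sq_int_def
proof
  show "(\<lambda>w. a w - b w) \<in> borel_measurable M" using assms unfolding sq_int_def by auto
  have "integrable M (\<lambda>w. (a w)^2 + (b w)^2 - 2 * (a w * b w))"
    using assms sq_int_prod[OF assms] unfolding sq_int_def by auto
  thus "integrable M (\<lambda>w. (a w - b w)^2)" by (simp add: power2_diff mult.assoc)
qed

lemma real_cs_aux:
  fixes I A B :: real
  assumes "A \<ge> 0" "B \<ge> 0" "\<And>s. s > 0 \<Longrightarrow> I \<le> (s * A + B / s) / 2"
  shows "I \<le> sqrt A * sqrt B"
proof (cases "A > 0 \<and> B > 0")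
  case True
  define s where "s = sqrt B / sqrt A"
  have s: "s > 0" using True s_def by simp
  have sa: "sqrt A * sqrt A = A" "sqrt B * sqrt B = B" using True by simp_all
  have pos: "sqrt A > 0" "sqrt B > 0" using True by simp_all
  have g1: "\<And>\<alpha> \<beta>::real. \<alpha> > 0 \<Longrightarrow> \<beta> / \<alpha> * (\<alpha> * \<alpha>) = \<alpha> * \<beta>" by (simp add: divide_simps)
  have g2: "\<And>\<alpha> \<beta>::real. \<alpha> > 0 \<Longrightarrow> \<beta> > 0 \<Longrightarrow> (\<beta> * \<beta>) / (\<beta> / \<alpha>) = \<alpha> * \<beta>" by (simp add: divide_simps)
  have "s * A = sqrt A * sqrt B" using g1[OF pos(1), of "sqrt B"] unfolding s_def sa .
  moreover have "B / s = sqrt A * sqrt B" using g2[OF pos] unfolding s_def sa .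
  ultimately show ?thesis using assms(3)[OF s] by simp
next
  case False
  hence z: "A = 0 \<or> B = 0" using assms by auto
  show ?thesis
  proof (rule ccontr)
    assume "\<not> ?thesis"
    hence I: "I > 0" using z by auto
    show False
    proof (cases "A = 0")
      case True
      define s where "s = (B + 1) / I"
      have s: "s > 0" using I assms s_def by simp
      have "I \<le> (B / s) / 2" using assms(3)[OF s] True by simp
      also have "B / s = B * I / (B + 1)" unfolding s_def using I assms by (simp add: field_simps)
      also have "B * I / (B + 1) < I" using I assms by (simp add: field_simps)
      finally show False using I by simp
    next
      case False
      hence B0: "B = 0" using z by simp
      define s where "s = I / (A + 1)"
      have s: "s > 0" using I assms s_def by simp
      have "I \<le> (s * A) / 2" using assms(3)[OF s] B0 by simp
      also have "s * A = I * A / (A + 1)" unfolding s_def by simp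
      also have "I * A / (A + 1) < I" using I assms by (simp add: field_simps)
      finally show False using I by simp
    qed
  qed
qed

lemma L2norm_sq: "L2norm M h ^ 2 = (LINT w|M. (h w)^2)"
  unfolding L2norm_def by (simp add: integral_nonneg_AE)

lemma L2norm_nonneg: "L2norm M h \<ge> 0"
  unfolding L2norm_def by simp

lemma L2_cs:
  assumes a: "sq_int M a" and b: "sq_int M b"
  shows "\<bar>LINT w|M. a w * b w\<bar> \<le> L2norm M a * L2norm M b"
proof -
  have ia: "integrable M (\<lambda>w. (a w)^2)" and ib: "integrable M (\<lambda>w. (b w)^2)"
    using a b unfolding sq_int_def by auto
  have iab: "integrable M (\<lambda>w. \<bar>a w * b w\<bar>)" using sq_int_prod[OF a b] by auto
  have "\<bar>LINT w|M. a w * b w\<bar> \<le> (LINT w|M. \<bar>a w * b w\<bar>)"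
    using integral_abs_bound[of M "\<lambda>w. a w * b w"] by simp
  also have "\<dots> \<le> sqrt (LINT w|M. (a w)^2) * sqrt (LINT w|M. (b w)^2)"
  proof (rule real_cs_aux)
    show "0 \<le> (LINT w|M. (a w)^2)" "0 \<le> (LINT w|M. (b w)^2)" by (auto intro: integral_nonneg_AE)
    fix s :: real assume s: "s > 0"
    have pw: "\<bar>a w * b w\<bar> \<le> (s * (a w)^2 + (b w)^2 / s) / 2" for w
    proof -
      have "0 \<le> (s * \<bar>a w\<bar> - \<bar>b w\<bar>)^2" by simp
      hence "2 * s * \<bar>a w * b w\<bar> \<le> s^2 * (a w)^2 + (b w)^2"
        by (simp add: power2_eq_square algebra_simps abs_mult)
      thus ?thesis using s by (simp add: field_simps power2_eq_square)
    qed
    have "(LINT w|M. \<bar>a w * b w\<bar>) \<le> (LINT w|M. (s * (a w)^2 + (b w)^2 / s) / 2)"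
      by (rule integral_mono[OF iab]) (use ia ib pw in auto)
    also have "\<dots> = (s * (LINT w|M. (a w)^2) + (LINT w|M. (b w)^2) / s) / 2"
      using ia ib by simp
    finally show "(LINT w|M. \<bar>a w * b w\<bar>) \<le> (s * (LINT w|M. (a w)^2) + (LINT w|M. (b w)^2) / s) / 2" .
  qed
  finally show ?thesis unfolding L2norm_def .
qed

lemma pw_ineq: "(max a 0)^2 / 2 - (max b 0)^2 / 2 \<le> max b 0 * (a - b) + (a - b)^2 / 2" for a b :: real
proof (cases "a \<ge> 0")
  case a: True
  show ?thesis
  proof (cases "b \<ge> 0")
    case True
    have "(a - b)^2 = a^2 - 2*(a*b) + b^2" by (simp add: power2_diff)
    moreover have "b * (a - b) = a*b - b^2" by (simp add: power2_eq_square algebra_simps)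
    ultimately have "a^2 / 2 - b^2 / 2 = b * (a - b) + (a - b)^2 / 2" by linarith
    thus ?thesis using a True by simp
  next
    case False
    have "a^2 \<le> (a - b)^2" using a False by (intro power_mono) auto
    thus ?thesis using a False by simp
  qed
next
  case a: False
  show ?thesis
  proof (cases "b \<ge> 0")
    case True
    have "0 \<le> a^2" by simp
    moreover have "(a - b)^2 = a^2 - 2*(a*b) + b^2" by (simp add: power2_diff)
    moreover have "b * (a - b) = a*b - b^2" by (simp add: power2_eq_square algebra_simps)
    ultimately have "- (b^2) / 2 \<le> b * (a - b) + (a - b)^2 / 2" by linarith
    thus ?thesis using a True by simp
  next
    case False
    thus ?thesis using a by simp
  qed
qed

context
  fixes M :: "'w measure" and e :: "'y::real_normed_vector \<Rightarrow> 'w \<Rightarrow> real"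
  assumes emb: "dense_L2_embedding M e"
begin

lemma emb_parts1: "(\<forall>y. sq_int M (e y))"
  using emb unfolding dense_L2_embedding_def by (elim conjE) assumption
lemma emb_parts2: "(\<forall>y1 y2. AE w in M. e (y1 + y2) w = e y1 w + e y2 w)"
  using emb unfolding dense_L2_embedding_def by (elim conjE) assumption
lemma emb_parts3: "(\<forall>c y. AE w in M. e (c *\<^sub>R y) w = c * e y w)"
  using emb unfolding dense_L2_embedding_def by (elim conjE) assumption
lemma emb_parts4: "(\<exists>C. \<forall>y. L2norm M (e y) \<le> C * norm y)"
  using emb unfolding dense_L2_embedding_def by (elim conjE) assumption

lemma e_sq: "sq_int M (e y)" using emb_parts1 by (rule spec)

lemma e_meas[measurable]: "e y \<in> borel_measurable M" using e_sq unfolding sq_int_def by blast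

lemma e_add: "AE w in M. e (y1 + y2) w = e y1 w + e y2 w" using emb_parts2 by (elim allE)

lemma e_scale: "AE w in M. e (c *\<^sub>R y) w = c * e y w" using emb_parts3 by (elim allE)

lemma e_diff: "AE w in M. e (y1 - y2) w = e y1 w - e y2 w"
proof -
  have "AE w in M. e (y1 + (-1) *\<^sub>R y2) w = e y1 w + e ((-1) *\<^sub>R y2) w" by (rule e_add)
  moreover have "AE w in M. e ((-1) *\<^sub>R y2) w = (-1) * e y2 w" by (rule e_scale)
  ultimately show ?thesis by eventually_elim simp
qed

lemma e_neg: "AE w in M. e (- y) w = - e y w"
  using e_scale[of "-1" y] by simp

definition C0 :: real where "C0 = (SOME C. C \<ge> 0 \<and> (\<forall>y. L2norm M (e y) \<le> C * norm y))"

lemma C0: "C0 \<ge> 0" "L2norm M (e y) \<le> C0 * norm y"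
proof -
  obtain C where C: "\<forall>y. L2norm M (e y) \<le> C * norm y" using emb_parts4 by blast
  have "\<exists>C. C \<ge> 0 \<and> (\<forall>y. L2norm M (e y) \<le> C * norm y)"
  proof (intro exI[of _ "max C 0"] conjI allI)
    fix y show "L2norm M (e y) \<le> max C 0 * norm y"
      using C[rule_format, of y] by (meson max.cobounded1 mult_right_mono norm_ge_zero order_trans)
  qed simp
  hence "C0 \<ge> 0 \<and> (\<forall>y. L2norm M (e y) \<le> C0 * norm y)" unfolding C0_def by (rule someI_ex)
  thus "C0 \<ge> 0" "L2norm M (e y) \<le> C0 * norm y" by auto
qed

lemma lamf_bl:
  assumes z: "sq_int M z"
  shows "bounded_linear (\<lambda>y. LINT w|M. z w * e y w)"
proof (rule bounded_linear_intro[where K="L2norm M z * C0"])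
  have zm[measurable]: "z \<in> borel_measurable M" using z unfolding sq_int_def by blast
  fix y1 y2
  have "(LINT w|M. z w * e (y1 + y2) w) = (LINT w|M. z w * e y1 w + z w * e y2 w)"
    by (rule integral_cong_AE) (use e_add[of y1 y2] in \<open>auto simp: algebra_simps\<close>)
  also have "\<dots> = (LINT w|M. z w * e y1 w) + (LINT w|M. z w * e y2 w)"
    by (rule Bochner_Integration.integral_add) (auto intro: sq_int_prod z e_sq)
  finally show "(LINT w|M. z w * e (y1 + y2) w) = (LINT w|M. z w * e y1 w) + (LINT w|M. z w * e y2 w)" .
next
  have zm[measurable]: "z \<in> borel_measurable M" using z unfolding sq_int_def by blast
  fix r y
  have "(LINT w|M. z w * e (r *\<^sub>R y) w) = (LINT w|M. r * (z w * e y w))"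
    by (rule integral_cong_AE) (use e_scale[of r y] in \<open>auto simp: algebra_simps\<close>)
  also have "\<dots> = r * (LINT w|M. z w * e y w)" by simp
  finally show "(LINT w|M. z w * e (r *\<^sub>R y) w) = r *\<^sub>R (LINT w|M. z w * e y w)" by simp
next
  fix y
  have "\<bar>LINT w|M. z w * e y w\<bar> \<le> L2norm M z * L2norm M (e y)" by (rule L2_cs[OF z e_sq])
  also have "\<dots> \<le> L2norm M z * (C0 * norm y)" by (intro mult_left_mono C0 L2norm_nonneg)
  finally show "norm (LINT w|M. z w * e y w) \<le> norm y * (L2norm M z * C0)" by (simp add: algebra_simps)
qed

lemma penalty_ineq:
  assumes rho: "\<rho> \<ge> 0"
  shows "\<rho> / 2 * (L2norm M (pos_part (e y')))^2 - \<rho> / 2 * (L2norm M (pos_part (e y)))^2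
     \<le> (LINT w|M. \<rho> * pos_part (e y) w * e y' w) - (LINT w|M. \<rho> * pos_part (e y) w * e y w)
        + \<rho> / 2 * C0^2 * (norm (y' - y))^2"
proof -
  let ?p = "pos_part (e y)" and ?q = "pos_part (e y')"
  have sp: "sq_int M ?p" "sq_int M ?q" by (auto intro: sq_int_pos_part e_sq)
  have i1: "integrable M (\<lambda>w. (?q w)^2)" "integrable M (\<lambda>w. (?p w)^2)" using sp unfolding sq_int_def by auto
  have i2: "integrable M (\<lambda>w. ?p w * e y' w)" "integrable M (\<lambda>w. ?p w * e y w)"
    by (auto intro: sq_int_prod sp e_sq)
  have sd: "sq_int M (\<lambda>w. e y' w - e y w)" by (intro sq_int_diff e_sq)
  have i3: "integrable M (\<lambda>w. (e y' w - e y w)^2)" using sd unfolding sq_int_def by auto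
  have "(LINT w|M. (?q w)^2) / 2 - (LINT w|M. (?p w)^2) / 2 = (LINT w|M. (?q w)^2 / 2 - (?p w)^2 / 2)"
    using i1 by simp
  also have "\<dots> \<le> (LINT w|M. (?p w * e y' w - ?p w * e y w) + (e y' w - e y w)^2 / 2)"
  proof (rule integral_mono)
    show "integrable M (\<lambda>w. (?q w)^2 / 2 - (?p w)^2 / 2)" using i1 by auto
    show "integrable M (\<lambda>w. (?p w * e y' w - ?p w * e y w) + (e y' w - e y w)^2 / 2)" using i2 i3 by auto
    fix w show "(?q w)^2 / 2 - (?p w)^2 / 2 \<le> (?p w * e y' w - ?p w * e y w) + (e y' w - e y w)^2 / 2"
      using pw_ineq[of "e y' w" "e y w"] unfolding pos_part_def by (simp add: algebra_simps)
  qed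
  also have "\<dots> = ((LINT w|M. ?p w * e y' w) - (LINT w|M. ?p w * e y w)) + (LINT w|M. (e y' w - e y w)^2) / 2"
    using i2 i3 by simp
  also have "(LINT w|M. (e y' w - e y w)^2) = (L2norm M (e (y' - y)))^2"
    unfolding L2norm_sq by (rule integral_cong_AE) (use e_diff[of y' y] in auto)
  also have "\<dots> \<le> (C0 * norm (y' - y))^2" using C0 L2norm_nonneg by (intro power_mono) auto
  finally have main: "(LINT w|M. (?q w)^2) / 2 - (LINT w|M. (?p w)^2) / 2
      \<le> ((LINT w|M. ?p w * e y' w) - (LINT w|M. ?p w * e y w)) + (C0 * norm (y' - y))^2 / 2" by simp
  have "\<rho> * ((LINT w|M. (?q w)^2) / 2 - (LINT w|M. (?p w)^2) / 2)
      \<le> \<rho> * (((LINT w|M. ?p w * e y' w) - (LINT w|M. ?p w * e y w)) + (C0 * norm (y' - y))^2 / 2)"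
    using main rho by (rule mult_left_mono)
  thus ?thesis unfolding L2norm_sq
    by (simp add: algebra_simps power_mult_distrib mult.assoc)
qed

end

lemma ev_right_lt: "c > 0 \<Longrightarrow> eventually (\<lambda>t::real. t < c) (at_right 0)"
  unfolding eventually_at_right_field by (intro exI[of _ c]) auto

lemma real_dir_deriv:
  fixes f :: "'x::real_normed_vector \<Rightarrow> real"
  assumes "(f has_derivative blinfun_apply F) (at x)"
  shows "((\<lambda>t. (f (x + t *\<^sub>R v) - f x) / t) \<longlongrightarrow> blinfun_apply F v) (at_right 0)"
proof -
  have l: "((\<lambda>t. x + t *\<^sub>R v) has_derivative (\<lambda>t. t *\<^sub>R v)) (at 0)"
    by (auto intro!: derivative_eq_intros)
  have "((\<lambda>t. f (x + t *\<^sub>R v)) has_derivative (\<lambda>t. blinfun_apply F (t *\<^sub>R v))) (at 0)"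
    by (rule has_derivative_compose[OF l]) (use assms in simp)
  moreover have "(\<lambda>t. blinfun_apply F (t *\<^sub>R v)) = (*) (blinfun_apply F v)"
    by (auto simp: blinfun.scaleR_right)
  ultimately have "((\<lambda>t. f (x + t *\<^sub>R v)) has_field_derivative blinfun_apply F v) (at 0)"
    by (simp add: has_field_derivative_def)
  hence "((\<lambda>h. (f (x + (0 + h) *\<^sub>R v) - f (x + 0 *\<^sub>R v)) / h) \<longlongrightarrow> blinfun_apply F v) (at 0)"
    by (simp only: DERIV_def)
  hence "((\<lambda>t. (f (x + t *\<^sub>R v) - f x) / t) \<longlongrightarrow> blinfun_apply F v) (at 0)" by simp
  thus ?thesis by (simp add: filterlim_at_split)
qed

lemma stationarity:
  fixes f :: "'x::real_normed_vector \<Rightarrow> real" and g :: "'x \<Rightarrow> 'y::real_normed_vector"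
    and M :: "'w measure" and e :: "'y \<Rightarrow> 'w \<Rightarrow> real"
  assumes emb: "dense_L2_embedding M e"
    and fd: "(f has_derivative blinfun_apply F) (at x)"
    and gd: "(g has_derivative blinfun_apply G) (at x)"
    and rho: "\<rho> \<ge> 0" and eta: "\<eta> > 0"
    and min: "\<And>y. norm (y - x) < \<eta> \<Longrightarrow>
       f x + \<rho> / 2 * (L2norm M (pos_part (e (g x))))^2 + (norm (x - xb))^2 / 2
       \<le> f y + \<rho> / 2 * (L2norm M (pos_part (e (g y))))^2 + (norm (y - xb))^2 / 2"
    and lam: "\<And>y. blinfun_apply lam y = (LINT w|M. \<rho> * pos_part (e (g x)) w * e y w)"
  shows "norm (F + (lam o\<^sub>L G)) \<le> norm (x - xb)"
proof -
  define d where "d = norm (x - xb)"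
  define C where "C = C0 M e"
  have key: "0 \<le> blinfun_apply F v + blinfun_apply lam (blinfun_apply G v) + norm v * d" for v
  proof -
    define q where "q t = (f (x + t *\<^sub>R v) - f x) / t
        + (blinfun_apply lam (g (x + t *\<^sub>R v)) - blinfun_apply lam (g x)) / t
        + \<rho> / 2 * C^2 * ((norm (g (x + t *\<^sub>R v) - g x))^2 / t) + norm v * d + t * (norm v)^2 / 2" for t
    have ev: "eventually (\<lambda>t. 0 \<le> q t) (at_right 0)"
    proof -
      have "eventually (\<lambda>t. t < \<eta> / (norm v + 1)) (at_right (0::real))"
        using eta by (intro ev_right_lt divide_pos_pos) (auto intro: add_nonneg_pos)
      moreover have "eventually (\<lambda>t. t > 0) (at_right (0::real))" by (simp add: eventually_at_right_less)
      ultimately show ?thesis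
      proof eventually_elim
        case (elim t)
        define y where "y = x + t *\<^sub>R v"
        have "norm (y - x) = t * norm v" using elim y_def by simp
        also have "\<dots> < \<eta>"
        proof -
          have "t * norm v \<le> t * (norm v + 1)" using elim by simp
          also have "\<dots> < \<eta>" using elim by (simp add: field_simps add_pos_nonneg)
          finally show ?thesis .
        qed
        finally have m: "f x + \<rho> / 2 * (L2norm M (pos_part (e (g x))))^2 + d^2 / 2
           \<le> f y + \<rho> / 2 * (L2norm M (pos_part (e (g y))))^2 + (norm (y - xb))^2 / 2"
          using min d_def by blast
        have p: "\<rho> / 2 * (L2norm M (pos_part (e (g y))))^2 - \<rho> / 2 * (L2norm M (pos_part (e (g x))))^2
           \<le> blinfun_apply lam (g y) - blinfun_apply lam (g x) + \<rho> / 2 * C^2 * (norm (g y - g x))^2"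
          using penalty_ineq[OF emb rho, of "g y" "g x"] lam C_def by simp
        have "norm (y - xb) \<le> d + t * norm v"
        proof -
          have "y - xb = (x - xb) + t *\<^sub>R v" using y_def by simp
          hence "norm (y - xb) \<le> norm (x - xb) + norm (t *\<^sub>R v)" using norm_triangle_ineq by metis
          thus ?thesis using elim d_def by simp
        qed
        hence "(norm (y - xb))^2 \<le> (d + t * norm v)^2" by (intro power_mono) auto
        hence n: "(norm (y - xb))^2 / 2 - d^2 / 2 \<le> t * (norm v * d) + t * (t * (norm v)^2 / 2)"
          by (simp add: power2_eq_square algebra_simps)
        have "0 \<le> (f y - f x) + (blinfun_apply lam (g y) - blinfun_apply lam (g x))
                 + \<rho> / 2 * C^2 * (norm (g y - g x))^2 + t * (norm v * d) + t * (t * (norm v)^2 / 2)"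
          using m p n by linarith
        also have "\<dots> = t * q t" unfolding q_def y_def using elim by (simp add: field_simps)
        finally show ?case using elim by (simp add: zero_le_mult_iff)
      qed
    qed
    have lim: "(q \<longlongrightarrow> blinfun_apply F v + blinfun_apply lam (blinfun_apply G v) + \<rho> / 2 * C^2 * 0 + norm v * d + 0 * (norm v)^2 / 2) (at_right 0)"
      unfolding q_def
    proof (intro tendsto_intros)
      show "((\<lambda>t. (f (x + t *\<^sub>R v) - f x) / t) \<longlongrightarrow> blinfun_apply F v) (at_right 0)"
        by (rule real_dir_deriv[OF fd])
      have "((\<lambda>t. blinfun_apply lam (g t)) has_derivative blinfun_apply (lam o\<^sub>L G)) (at x)"
      proof -
        have "blinfun_apply (lam o\<^sub>L G) = (\<lambda>x. blinfun_apply lam (blinfun_apply G x))" by (rule ext) simp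
        thus ?thesis using bounded_linear.has_derivative[OF blinfun.bounded_linear_right[of lam] gd] by simp
      qed
      from real_dir_deriv[OF this, of v]
      show "((\<lambda>t. (blinfun_apply lam (g (x + t *\<^sub>R v)) - blinfun_apply lam (g x)) / t) \<longlongrightarrow> blinfun_apply lam (blinfun_apply G v)) (at_right 0)"
        by simp
      show "((\<lambda>t. (norm (g (x + t *\<^sub>R v) - g x))^2 / t) \<longlongrightarrow> 0) (at_right 0)"
      proof -
        obtain \<delta> where \<delta>: "\<delta> > 0" "\<And>y. norm (y - x) < \<delta> \<Longrightarrow> norm (g y - g x - blinfun_apply G (y - x)) \<le> 1 * norm (y - x)"
          using gd unfolding has_derivative_at_alt by (meson zero_less_one)
        define K where "K = norm G * norm v + norm v"
        have "eventually (\<lambda>t. t < \<delta> / (norm v + 1)) (at_right (0::real))"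
          using \<delta> by (intro ev_right_lt divide_pos_pos) (auto intro: add_nonneg_pos)
        moreover have "eventually (\<lambda>t. t > 0) (at_right (0::real))" by (simp add: eventually_at_right_less)
        ultimately have ev2: "eventually (\<lambda>t. (norm (g (x + t *\<^sub>R v) - g x))^2 / t \<le> t * K^2) (at_right 0)"
        proof eventually_elim
          case (elim t)
          have "norm ((x + t *\<^sub>R v) - x) = t * norm v" using elim by simp
          also have "\<dots> < \<delta>"
          proof -
            have "t * norm v \<le> t * (norm v + 1)" using elim by simp
            also have "\<dots> < \<delta>" using elim by (simp add: field_simps add_pos_nonneg)
            finally show ?thesis .
          qed
          finally have "norm (g (x + t *\<^sub>R v) - g x - blinfun_apply G (t *\<^sub>R v)) \<le> t * norm v"
            using \<delta>(2)[of "x + t *\<^sub>R v"] elim by simp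
          moreover have "norm (blinfun_apply G (t *\<^sub>R v)) \<le> t * (norm G * norm v)"
            using norm_blinfun[of G "t *\<^sub>R v"] elim by (simp add: algebra_simps)
          ultimately have "norm (g (x + t *\<^sub>R v) - g x) \<le> t * K"
            unfolding K_def using norm_triangle_ineq[of "g (x + t *\<^sub>R v) - g x - blinfun_apply G (t *\<^sub>R v)" "blinfun_apply G (t *\<^sub>R v)"]
            by (simp add: algebra_simps)
          hence "(norm (g (x + t *\<^sub>R v) - g x))^2 \<le> (t * K)^2" by (intro power_mono) auto
          thus ?case using elim by (simp add: field_simps power2_eq_square)
        qed
        have ev1: "eventually (\<lambda>t. 0 \<le> (norm (g (x + t *\<^sub>R v) - g x))^2 / t) (at_right 0)"
          using eventually_at_right_less[of "0::real"] by eventually_elim simp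
        have "((\<lambda>t. t * K^2) \<longlongrightarrow> 0 * K^2) (at_right (0::real))"
          by (intro tendsto_intros)
        hence "((\<lambda>t. t * K^2) \<longlongrightarrow> 0) (at_right (0::real))" by simp
        thus ?thesis by (rule tendsto_sandwich[OF ev1 ev2 tendsto_const])
      qed
    qed simp
    have "0 \<le> blinfun_apply F v + blinfun_apply lam (blinfun_apply G v) + \<rho> / 2 * C^2 * 0 + norm v * d + 0 * (norm v)^2 / 2"
      by (rule tendsto_lowerbound[OF lim ev]) simp
    thus ?thesis by simp
  qed
  show ?thesis unfolding d_def[symmetric]
  proof (rule norm_blinfun_bound)
    show "0 \<le> d" unfolding d_def by simp
    fix v
    have a: "0 \<le> blinfun_apply (F + (lam o\<^sub>L G)) v + norm v * d" using key[of v] by (simp add: blinfun.add_left)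
    have b: "0 \<le> - blinfun_apply (F + (lam o\<^sub>L G)) v + norm v * d" using key[of "-v"]
      by (simp add: blinfun.minus_right blinfun.add_left)
    show "norm (blinfun_apply (F + (lam o\<^sub>L G)) v) \<le> d * norm v" using a b by (simp add: abs_le_iff algebra_simps)
  qed
qed

theorem theorem5p3:
  fixes M :: "'w measure"
    and e :: "'y::banach \<Rightarrow> 'w \<Rightarrow> real"
    and f :: "'x::banach \<Rightarrow> real" and f' :: "'x \<Rightarrow> ('x \<Rightarrow>\<^sub>L real)"
    and g :: "'x \<Rightarrow> 'y" and g' :: "'x \<Rightarrow> ('x \<Rightarrow>\<^sub>L 'y)"
    and xb :: 'x
  assumes refl: "reflexive_space TYPE('x)"
    and emb: "dense_L2_embedding M e"
    and f_deriv: "\<And>x. (f has_derivative blinfun_apply (f' x)) (at x)"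
    and f'_cont: "continuous_on UNIV f'"
    and g_deriv: "\<And>x. (g has_derivative blinfun_apply (g' x)) (at x)"
    and g'_cont: "continuous_on UNIV g'"
    and f_wlsc: "weakly_lsc f"
    and gplus_wlsc: "weakly_lsc (\<lambda>x. L2norm M (pos_part (e (g x))))"
    and loc: "local_solution M e f g xb"
  shows "\<exists>(x :: nat \<Rightarrow> 'x) (z :: nat \<Rightarrow> 'w \<Rightarrow> real) (lam :: nat \<Rightarrow> ('y \<Rightarrow>\<^sub>L real)).
           x \<longlonglongrightarrow> xb \<and>
           (\<forall>k. sq_int M (z k)) \<and>
           (\<forall>k y. blinfun_apply (lam k) y = (LINT w|M. z k w * e y w)) \<and>
           (\<forall>k. lam k \<in> dual_cone_KY M e) \<and>
           (\<lambda>k. f' (x k) + (lam k o\<^sub>L g' (x k))) \<longlonglongrightarrow> 0 \<and>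
           (\<lambda>k. LINT w|M. z k w * neg_part (e (g (x k))) w) \<longlonglongrightarrow> 0"
proof -
  define N where "N x = L2norm M (pos_part (e (g x)))" for x
  have N0: "N x \<ge> 0" for x unfolding N_def by (rule L2norm_nonneg)
  have Nlsc: "weakly_lsc N" using gplus_wlsc unfolding N_def .
  obtain \<epsilon> where \<epsilon>: "\<epsilon> > 0" and lopt: "\<And>x. - g x \<in> cone_KY M e \<Longrightarrow> norm (x - xb) < \<epsilon> \<Longrightarrow> f xb \<le> f x"
    using loc unfolding local_solution_def by blast
  have feas: "- g xb \<in> cone_KY M e" using loc unfolding local_solution_def by blast
  have N_zero_iff: "N x = 0 \<longleftrightarrow> - g x \<in> cone_KY M e" for x
  proof -
    have sp: "sq_int M (pos_part (e (g x)))" by (rule sq_int_pos_part[OF e_sq[OF emb]])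
    have im: "integrable M (\<lambda>w. (pos_part (e (g x)) w)^2)" using sp unfolding sq_int_def by blast
    have "N x = 0 \<longleftrightarrow> (LINT w|M. (pos_part (e (g x)) w)^2) = 0"
      unfolding N_def L2norm_def by simp
    also have "\<dots> \<longleftrightarrow> (AE w in M. (pos_part (e (g x)) w)^2 = 0)"
      by (rule integral_nonneg_eq_0_iff_AE[OF im]) simp
    also have "\<dots> \<longleftrightarrow> (AE w in M. e (g x) w \<le> 0)"
      unfolding pos_part_def by (intro AE_cong) (auto simp: max_def)
    also have "\<dots> \<longleftrightarrow> (AE w in M. e (- g x) w \<ge> 0)"
    proof -
      have "AE w in M. e (- g x) w = - e (g x) w" by (rule e_neg[OF emb])
      thus ?thesis by (auto elim: AE_mp)
    qed
    finally show ?thesis unfolding cone_KY_def by simp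
  qed
  have Nxb: "N xb = 0" using N_zero_iff feas by simp
  define r where "r = \<epsilon> / 2"
  have r: "r > 0" "r < \<epsilon>" using \<epsilon> r_def by auto
  define C where "C = cball xb r"
  have cC: "compactin weak_topology C" unfolding C_def by (rule weak_compact_cball[OF refl])
  have xbC: "xb \<in> C" unfolding C_def using r by simp
  define \<Phi> where "\<Phi> k x = f x + real (Suc k) / 2 * (N x)^2 + (norm (x - xb))^2 / 2" for k x
  have \<Phi>lsc: "weakly_lsc (\<Phi> k)" for k
  proof -
    have "weakly_lsc (\<lambda>x. f x + real (Suc k) / 2 * (N x)^2)"
      by (rule weakly_lsc_add[OF f_wlsc weakly_lsc_scaled_sq[OF Nlsc N0]]) simp
    hence "weakly_lsc (\<lambda>x. (f x + real (Suc k) / 2 * (N x)^2) + (norm (x - xb))^2 / 2)"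
      by (rule weakly_lsc_add[OF _ weakly_lsc_dist2])
    thus ?thesis unfolding \<Phi>_def .
  qed
  have "\<forall>k. \<exists>x\<in>C. \<forall>y\<in>C. \<Phi> k x \<le> \<Phi> k y"
    using weak_lsc_attains_min[OF cC _ \<Phi>lsc] xbC by blast
  then obtain xs where xsC: "\<And>k. xs k \<in> C" and xsmin: "\<And>k y. y \<in> C \<Longrightarrow> \<Phi> k (xs k) \<le> \<Phi> k y"
    by metis
  obtain m0 where m0: "m0 \<in> C" "\<And>y. y \<in> C \<Longrightarrow> f m0 \<le> f y"
    using weak_lsc_attains_min[OF cC _ f_wlsc] xbC by blast
  define m where "m = f m0"
  have mle: "m \<le> f y" if "y \<in> C" for y using m0 that m_def by simp
  have D0: "f xb - m \<ge> 0" using mle[OF xbC] by simp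
  have \<Phi>bound: "\<Phi> k (xs k) \<le> f xb" for k
    using xsmin[OF xbC, of k] Nxb unfolding \<Phi>_def by simp
  have Nbound: "(N (xs k))^2 \<le> 2 * (f xb - m) / real (Suc k)" for k
  proof -
    have "real (Suc k) / 2 * (N (xs k))^2 \<le> f xb - m"
    proof -
      have "(norm (xs k - xb))^2 / 2 \<ge> 0" by simp
      thus ?thesis using \<Phi>bound[of k] mle[OF xsC[of k]] unfolding \<Phi>_def by linarith
    qed
    thus ?thesis by (simp add: field_simps)
  qed
  have fbound: "f (xs k) + (norm (xs k - xb))^2 / 2 \<le> f xb" for k
  proof -
    have "real (Suc k) / 2 * (N (xs k))^2 \<ge> 0" by simp
    thus ?thesis using \<Phi>bound[of k] unfolding \<Phi>_def by linarith
  qed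
  have conv: "xs \<longlonglongrightarrow> xb"
    unfolding tendsto_iff
  proof (intro allI impI)
    fix \<delta> :: real assume \<delta>: "\<delta> > 0"
    show "eventually (\<lambda>k. dist (xs k) xb < \<delta>) sequentially"
    proof (rule ccontr)
      assume ne: "\<not> eventually (\<lambda>k. dist (xs k) xb < \<delta>) sequentially"
      have freq: "\<exists>k\<ge>n. norm (xs k - xb) \<ge> \<delta>" for n
        using ne unfolding eventually_sequentially by (auto simp: dist_norm not_less)
      define A where "A n = {xs k | k. k \<ge> n \<and> norm (xs k - xb) \<ge> \<delta>}" for n
      have "\<exists>x\<in>C. \<forall>n F. closedin weak_topology F \<longrightarrow> A n \<subseteq> F \<longrightarrow> x \<in> F"
      proof (rule weak_cluster[OF cC])
        show "A n \<subseteq> C" for n unfolding A_def using xsC by blast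
        show "A n \<noteq> {}" for n unfolding A_def using freq[of n] by blast
        show "A (Suc n) \<subseteq> A n" for n unfolding A_def by auto
      qed
      then obtain xs' where xs'C: "xs' \<in> C" and clu: "\<And>n F. closedin weak_topology F \<Longrightarrow> A n \<subseteq> F \<Longrightarrow> xs' \<in> F"
        by blast
      have Nle: "N xs' \<le> c" if c: "c > 0" for c
      proof -
        define n where "n = nat \<lceil>2 * (f xb - m) / c^2\<rceil>"
        have "A n \<subseteq> {x. N x \<le> c}"
        proof
          fix x assume "x \<in> A n"
          then obtain k where k: "x = xs k" "k \<ge> n" unfolding A_def by blast
          have "2 * (f xb - m) / c^2 \<le> real n" unfolding n_def by (rule real_nat_ceiling_ge)
          also have "\<dots> \<le> real (Suc k)" using k by simp
          finally have "2 * (f xb - m) \<le> real (Suc k) * c^2" using c by (simp add: field_simps)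
          hence "2 * (f xb - m) / real (Suc k) \<le> c^2" by (simp add: field_simps)
          hence "(N x)^2 \<le> c^2" using Nbound[of k] k by simp
          hence "N x \<le> c" by (rule power2_le_imp_le) (use c in simp)
          thus "x \<in> {x. N x \<le> c}" by simp
        qed
        moreover have "closedin weak_topology {x. N x \<le> c}" using Nlsc unfolding weakly_lsc_def by blast
        ultimately show ?thesis using clu by blast
      qed
      have "N xs' = 0"
      proof (rule ccontr)
        assume "N xs' \<noteq> 0" hence "N xs' > 0" using N0[of xs'] by simp
        thus False using Nle[of "N xs' / 2"] by simp
      qed
      hence feas': "- g xs' \<in> cone_KY M e" using N_zero_iff by simp
      have "norm (xs' - xb) < \<epsilon>" using xs'C r unfolding C_def by (simp add: dist_norm norm_minus_commute)
      hence opt: "f xb \<le> f xs'" using lopt feas' by blast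
      have "A 0 \<subseteq> {x. f x \<le> f xb - \<delta>^2 / 2}"
      proof
        fix x assume "x \<in> A 0"
        then obtain k where k: "x = xs k" "norm (xs k - xb) \<ge> \<delta>" unfolding A_def by blast
        have "\<delta>^2 \<le> (norm (xs k - xb))^2" using k \<delta> by (intro power_mono) auto
        thus "x \<in> {x. f x \<le> f xb - \<delta>^2 / 2}" using fbound[of k] k by simp
      qed
      moreover have "closedin weak_topology {x. f x \<le> f xb - \<delta>^2 / 2}" using f_wlsc unfolding weakly_lsc_def by blast
      ultimately have "f xs' \<le> f xb - \<delta>^2 / 2" using clu by blast
      moreover have "\<delta>^2 > 0" using \<delta> by simp
      ultimately show False using opt by linarith
    qed
  qed
  define z where "z k = (\<lambda>w. real (Suc k) * pos_part (e (g (xs k))) w)" for k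
  have zsq: "sq_int M (z k)" for k
    unfolding z_def by (intro sq_int_scale sq_int_pos_part e_sq[OF emb])
  define lam where "lam k = Blinfun (\<lambda>y. LINT w|M. z k w * e y w)" for k
  have lam_apply: "blinfun_apply (lam k) y = (LINT w|M. z k w * e y w)" for k y
    unfolding lam_def using lamf_bl[OF emb zsq] by (simp add: bounded_linear_Blinfun_apply)
  have lam_dual: "lam k \<in> dual_cone_KY M e" for k
    unfolding dual_cone_KY_def
  proof (intro CollectI ballI)
    fix y assume "y \<in> cone_KY M e"
    hence "AE w in M. e y w \<ge> 0" unfolding cone_KY_def by simp
    hence "AE w in M. 0 \<le> z k w * e y w"
      by eventually_elim (auto simp: z_def pos_part_def)
    thus "0 \<le> blinfun_apply (lam k) y" unfolding lam_apply by (rule integral_nonneg_AE)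
  qed
  have compl: "(\<lambda>k. LINT w|M. z k w * neg_part (e (g (xs k))) w) = (\<lambda>k. 0)"
  proof
    fix k
    have "(\<lambda>w. z k w * neg_part (e (g (xs k))) w) = (\<lambda>w. 0)"
      by (auto simp: z_def pos_part_def neg_part_def max_def)
    thus "(LINT w|M. z k w * neg_part (e (g (xs k))) w) = 0" by simp
  qed
  have stat: "eventually (\<lambda>k. norm (f' (xs k) + (lam k o\<^sub>L g' (xs k))) \<le> norm (xs k - xb)) sequentially"
  proof -
    have "eventually (\<lambda>k. dist (xs k) xb < r) sequentially" using conv r unfolding tendsto_iff by blast
    thus ?thesis
    proof eventually_elim
      case (elim k)
      define \<eta> where "\<eta> = r - norm (xs k - xb)"
      have \<eta>: "\<eta> > 0" using elim \<eta>_def by (simp add: dist_norm)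
      show ?case
      proof (rule stationarity[OF emb f_deriv g_deriv _ \<eta>])
        show "0 \<le> real (Suc k)" by simp
        fix y assume "norm (y - xs k) < \<eta>"
        hence "norm (y - xb) \<le> r"
          using norm_triangle_ineq[of "y - xs k" "xs k - xb"] \<eta>_def by simp
        hence "y \<in> C" unfolding C_def by (simp add: dist_norm norm_minus_commute)
        from xsmin[OF this, of k]
        show "f (xs k) + real (Suc k) / 2 * (L2norm M (pos_part (e (g (xs k)))))^2 + (norm (xs k - xb))^2 / 2
          \<le> f y + real (Suc k) / 2 * (L2norm M (pos_part (e (g y))))^2 + (norm (y - xb))^2 / 2"
          unfolding \<Phi>_def N_def .
      next
        fix y show "blinfun_apply (lam k) y = (LINT w|M. real (Suc k) * pos_part (e (g (xs k))) w * e y w)"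
          unfolding lam_apply z_def ..
      qed
    qed
  qed
  have "(\<lambda>k. f' (xs k) + (lam k o\<^sub>L g' (xs k))) \<longlonglongrightarrow> 0"
  proof (rule Lim_null_comparison[OF stat])
    have "(\<lambda>k. xs k - xb) \<longlonglongrightarrow> 0" using conv by (rule LIM_zero)
    thus "(\<lambda>k. norm (xs k - xb)) \<longlonglongrightarrow> 0" by (rule tendsto_norm_zero)
  qed
  thus ?thesis
    using conv zsq lam_apply lam_dual compl by (intro exI[of _ xs] exI[of _ z] exI[of _ lam]) auto
qed

end
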